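(* Let $p$ be a real homogeneous polynomial of degree $d\ge1$ in $n\ge2$ variables, let $\epsilon>0$, and let $k$ be a positive integer such that $$\frac{n-1}{2k}\ln(kd+1)<\ln(1+\epsilon).$$ Then $\|p\|_{2k}\le\|p\|_\infty\le(1+\epsilon)\|p\|_{2k}$.
   Context: $\mathbb{S}^{n-1}$ is the unit sphere in $\mathbb{R}^n$ with rotation-invariant probability measure $dx$; $\|p\|_{2k}=\left(\int_{\mathbb{S}^{n-1}}p^{2k}(x)\,dx\right)^{1/(2k)}$ and $\|p\|_\infty=\max_{x\in\mathbb{S}^{n-1}}|p(x)|$. *)

theory Defs
  imports "HOL-Analysis.Analysis"
begin

text \<open>A real homogeneous polynomial of degree d in the variables x_i (i ranging over the
finite index type 'n, so n = CARD('n)), given by its coefficient function on exponent vectors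
alpha with total degree d.\<close>
definition hom_poly :: "nat \<Rightarrow> (('n::finite \<Rightarrow> nat) \<Rightarrow> real) \<Rightarrow> real^'n \<Rightarrow> real" where
  "hom_poly d c x = (\<Sum>\<alpha>\<in>{\<alpha>::'n \<Rightarrow> nat. sum \<alpha> UNIV = d}. c \<alpha> * (\<Prod>i\<in>UNIV. (x $ i) ^ (\<alpha> i)))"

text \<open>Integral over the unit sphere with respect to the rotation-invariant probability
measure, realised as the normalised cone measure:
  integral over S^(n-1) of f = (1 / vol B) * integral over the unit ball B of f(x/|x|).\<close>
definition sphere_avg :: "(real^'n::finite \<Rightarrow> real) \<Rightarrow> real" where
  "sphere_avg f = integral (ball 0 1) (\<lambda>x. f (x /\<^sub>R norm x)) / Henstock_Kurzweil_Integration.content (ball (0::real^'n) 1)"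

definition sph_Lnorm :: "nat \<Rightarrow> (real^'n::finite \<Rightarrow> real) \<Rightarrow> real" where
  "sph_Lnorm k p = (sphere_avg (\<lambda>x. p x ^ (2*k))) powr (1 / real (2*k))"

definition sph_sup_norm :: "(real^'n::finite \<Rightarrow> real) \<Rightarrow> real" where
  "sph_sup_norm p = (SUP x\<in>sphere (0::real^'n) 1. \<bar>p x\<bar>)"

end

theory Submission
  imports Defs "HOL-Library.Countable"
begin


typedef 'a wo = "UNIV :: 'a set" by auto

instantiation wo :: (finite) linorder
begin
definition less_eq_wo :: "'a wo \<Rightarrow> 'a wo \<Rightarrow> bool" where
  "less_eq_wo x y = (to_nat (Rep_wo x) \<le> to_nat (Rep_wo y))"
definition less_wo :: "'a wo \<Rightarrow> 'a wo \<Rightarrow> bool" where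
  "less_wo x y = (to_nat (Rep_wo x) < to_nat (Rep_wo y))"
instance
  by standard (auto simp: less_eq_wo_def less_wo_def Rep_wo_inject[symmetric])
end

instance wo :: (finite) finite
proof
  have "UNIV = Abs_wo ` UNIV"
    by (metis Rep_wo_inverse surj_def)
  then show "finite (UNIV :: 'a wo set)" by (metis finite finite_imageI)
qed

instance wo :: (finite) wellorder
proof
  fix P :: "'a wo \<Rightarrow> bool" and a
  assume H: "\<And>x. (\<And>y. y < x \<Longrightarrow> P y) \<Longrightarrow> P x"
  show "P a"
    by (induction a rule: measure_induct_rule[of "\<lambda>x. to_nat (Rep_wo x)"]) (rule H, auto simp: less_wo_def)
qed



lemma inv_wellorder:
  fixes H :: "(real, 'm::{finite,wellorder}) vec \<Rightarrow> real" and T :: "(real, 'm) vec \<Rightarrow> (real, 'm) vec"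
  assumes T: "orthogonal_transformation T" and H: "H absolutely_integrable_on ball 0 1"
  shows "(H \<circ> T) absolutely_integrable_on ball 0 1 \<and> integral (ball 0 1) (H \<circ> T) = integral (ball 0 1) H"
proof -
  have lin: "linear T" using T orthogonal_transformation_linear by blast
  have img: "T ` ball 0 1 = ball 0 1"
    using image_orthogonal_transformation_ball[OF T, of 0 1] T
    by (simp add: linear_0 lin)
  define f :: "(real,'m) vec \<Rightarrow> real^1" where "f x = H x *\<^sub>R axis 1 1" for x
  have fi: "f absolutely_integrable_on T ` ball 0 1"
    unfolding img f_def by (rule absolutely_integrable_scaleR_right[OF H])
  have eq: "(\<lambda>x. \<bar>det (matrix T)\<bar> *\<^sub>R f (T x)) = f \<circ> T"
    using T by (auto simp: o_def)
  have A: "(f \<circ> T) absolutely_integrable_on ball 0 1 \<and> integral (ball 0 1) (f \<circ> T) = integral (T ` ball 0 1) f"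
    using has_absolute_integral_change_of_variables_linear[OF lin, where f=f and S="ball 0 1" and b="integral (T ` ball 0 1) f"] fi eq
    by simp
  have HT: "(H \<circ> T) = (\<lambda>x. (f \<circ> T) x $ 1)" by (auto simp: f_def o_def axis_def)
  have Hf: "H = (\<lambda>x. f x $ 1)" by (auto simp: f_def axis_def)
  have i1: "(H \<circ> T) absolutely_integrable_on ball 0 1"
  proof -
    have "(H \<circ> T) = (\<lambda>x. (f \<circ> T) x \<bullet> axis 1 1)" by (auto simp: f_def o_def inner_axis)
    then show ?thesis using absolutely_integrable_component[where f="f \<circ> T" and A="ball 0 1" and b="axis 1 1"] A by simp
  qed
  have i2: "(f \<circ> T) integrable_on ball 0 1" using A absolutely_integrable_on_def by blast
  have i3: "f integrable_on ball 0 1" using fi img absolutely_integrable_on_def by auto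
  have "integral (ball 0 1) (H \<circ> T) = integral (ball 0 1) (f \<circ> T) $ 1"
    unfolding HT using integral_component_eq_cart[where f="f \<circ> T" and s="ball 0 1" and k=1, OF i2] by simp
  also have "\<dots> = integral (ball 0 1) f $ 1" using A img by simp
  also have "\<dots> = integral (ball 0 1) H"
    unfolding Hf using integral_component_eq_cart[where f=f and s="ball 0 1" and k=1, OF i3] by simp
  finally show ?thesis using i1 by blast
qed



lemma twiddle_ball:
  fixes g :: "'a::euclidean_space \<Rightarrow> 'b::euclidean_space" and h :: "'b \<Rightarrow> 'a"
    and f :: "'b \<Rightarrow> real"
  assumes hg: "\<And>x. h (g x) = x" and gh: "\<And>x. g (h x) = x"
    and lg: "linear g" and ng: "\<And>x. norm (g x) = norm x"
    and gbox: "\<And>u v. \<exists>w z. g ` cbox u v = cbox w z"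
    and hbox: "\<And>u v. \<exists>w z. h ` cbox u v = cbox w z"
    and cont: "\<And>u v. Henstock_Kurzweil_Integration.content (g ` cbox u v) = Henstock_Kurzweil_Integration.content (cbox u v)"
    and fi: "(f has_integral i) (ball 0 1)"
  shows "((f \<circ> g) has_integral i) (ball 0 1)"
proof -
  have sub: "ball (0::'b) 1 \<subseteq> cbox (-One) One"
  proof
    fix x :: 'b assume "x \<in> ball 0 1"
    then have "norm x < 1" by simp
    then show "x \<in> cbox (-One) One"
      unfolding mem_box
    proof (intro ballI conjI)
      fix b :: 'b assume b: "b \<in> Basis"
      have "\<bar>x \<bullet> b\<bar> \<le> norm x" using Basis_le_norm[OF b] by simp
      moreover have "One \<bullet> b = (1::real)" using b by simp
      ultimately show "(- One) \<bullet> b \<le> x \<bullet> b" "x \<bullet> b \<le> One \<bullet> b" using \<open>norm x < 1\<close> by (simp_all add: inner_minus_left)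
    qed
  qed
  let ?f' = "\<lambda>x. if x \<in> ball 0 1 then f x else 0"
  have "(?f' has_integral i) (cbox (-One) One)"
    using has_integral_restrict[OF sub] fi by blast
  from has_integral_twiddle[where r=1 and g=g and h=h, OF _ hg gh _ gbox hbox _ this]
  have A: "((\<lambda>x. ?f' (g x)) has_integral i) (h ` cbox (-One) One)"
    using linear_continuous_at[OF lg[unfolded linear_conv_bounded_linear]] cont by auto
  have eq: "(\<lambda>x. ?f' (g x)) = (\<lambda>x. if x \<in> ball 0 1 then (f \<circ> g) x else 0)"
    using ng by (auto simp: fun_eq_iff)
  have sub2: "ball (0::'a) 1 \<subseteq> h ` cbox (-One) One"
  proof
    fix x :: 'a assume "x \<in> ball 0 1"
    then have "g x \<in> cbox (-One) One" using sub ng by auto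
    then show "x \<in> h ` cbox (-One) One" using hg by (metis image_eqI)
  qed
  show ?thesis using A unfolding eq using has_integral_restrict[OF sub2] by blast
qed



definition reidx :: "('b::finite \<Rightarrow> 'a::finite) \<Rightarrow> real^'a \<Rightarrow> real^'b" where
  "reidx \<sigma> x = (\<chi> j. x $ \<sigma> j)"

lemma reidx_comp:
  assumes "\<And>i. \<sigma> (\<tau> i) = i"
  shows "reidx \<tau> (reidx \<sigma> x) = x"
  using assms by (simp add: reidx_def vec_eq_iff)

lemma reidx_linear: "linear (reidx \<sigma>)"
  by (rule linearI) (simp_all add: reidx_def vec_eq_iff)

lemma reidx_inner:
  assumes "bij \<sigma>"
  shows "reidx \<sigma> x \<bullet> reidx \<sigma> y = x \<bullet> y"
proof -
  have "reidx \<sigma> x \<bullet> reidx \<sigma> y = (\<Sum>j\<in>UNIV. x $ \<sigma> j * y $ \<sigma> j)"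
    by (simp add: reidx_def inner_vec_def)
  also have "\<dots> = (\<Sum>i\<in>UNIV. x $ i * y $ i)"
    using sum.reindex_bij_betw[of \<sigma> UNIV UNIV "\<lambda>i. x $ i * y $ i"] assms
    by (simp add: bij_betw_def)
  finally show ?thesis by (simp add: inner_vec_def)
qed

lemma reidx_norm:
  assumes "bij \<sigma>"
  shows "norm (reidx \<sigma> x) = norm x"
  using reidx_inner[OF assms, of x x] by (simp add: norm_eq_sqrt_inner)

lemma reidx_cbox:
  assumes "\<And>i. \<sigma> (\<tau> i) = i" "\<And>j. \<tau> (\<sigma> j) = j"
  shows "reidx \<sigma> ` cbox u v = cbox (reidx \<sigma> u) (reidx \<sigma> v)"
proof (intro equalityI subsetI)
  fix y assume "y \<in> reidx \<sigma> ` cbox u v"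
  then show "y \<in> cbox (reidx \<sigma> u) (reidx \<sigma> v)"
    by (auto simp: mem_box_cart reidx_def)
next
  fix y assume y: "y \<in> cbox (reidx \<sigma> u) (reidx \<sigma> v)"
  have "reidx \<tau> y \<in> cbox u v"
    unfolding mem_box_cart
  proof
    fix i
    show "u $ i \<le> reidx \<tau> y $ i \<and> reidx \<tau> y $ i \<le> v $ i"
      using y[unfolded mem_box_cart, rule_format, of "\<tau> i"] assms by (simp add: reidx_def)
  qed
  moreover have "y = reidx \<sigma> (reidx \<tau> y)" using reidx_comp[of \<tau> \<sigma>] assms by simp
  ultimately show "y \<in> reidx \<sigma> ` cbox u v" by blast
qed

lemma reidx_content:
  assumes "\<And>i. \<sigma> (\<tau> i) = i" "\<And>j. \<tau> (\<sigma> j) = j"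
  shows "Henstock_Kurzweil_Integration.content (reidx \<sigma> ` cbox u v) = Henstock_Kurzweil_Integration.content (cbox u v)"
proof (cases "cbox u v = {}")
  case True then show ?thesis by simp
next
  case False
  have bij: "bij \<sigma>" using assms by (metis bijI' )
  have ne: "cbox (reidx \<sigma> u) (reidx \<sigma> v) \<noteq> {}" using False reidx_cbox[OF assms] by auto
  have "Henstock_Kurzweil_Integration.content (reidx \<sigma> ` cbox u v) = (\<Prod>j\<in>UNIV. v $ \<sigma> j - u $ \<sigma> j)"
    unfolding reidx_cbox[OF assms] content_cbox_cart[OF ne] by (simp add: reidx_def)
  also have "\<dots> = (\<Prod>i\<in>UNIV. v $ i - u $ i)"
    using prod.reindex_bij_betw[of \<sigma> UNIV UNIV "\<lambda>i. v $ i - u $ i"] bij by (simp add: bij_betw_def)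
  finally show ?thesis using content_cbox_cart[OF False] by simp
qed

lemma twiddle_reidx:
  fixes f :: "real^'a::finite \<Rightarrow> real" and \<sigma> :: "'b::finite \<Rightarrow> 'a"
  assumes "\<And>i. \<sigma> (\<tau> i) = i" "\<And>j. \<tau> (\<sigma> j) = j"
    and fi: "(f has_integral i) (ball 0 1)"
  shows "((f \<circ> reidx \<tau>) has_integral i) (ball 0 1)"
proof (rule twiddle_ball[where h="reidx \<sigma>", OF _ _ reidx_linear _ _ _ _ fi])
  have bt: "bij \<tau>" using assms by (metis bijI')
  show "\<And>x. reidx \<sigma> (reidx \<tau> x) = x" "\<And>x. reidx \<tau> (reidx \<sigma> x) = x"
    using reidx_comp assms by metis+
  show "\<And>x. norm (reidx \<tau> x) = norm x" using reidx_norm[OF bt] .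
  show "\<And>u v. \<exists>w z. reidx \<tau> ` cbox u v = cbox w z" "\<And>u v. \<exists>w z. reidx \<sigma> ` cbox u v = cbox w z"
    using reidx_cbox assms by metis+
  show "\<And>u v. Henstock_Kurzweil_Integration.content (reidx \<tau> ` cbox u v) = Henstock_Kurzweil_Integration.content (cbox u v)"
    using reidx_content assms by metis
qed



lemma Rep_Abs_wo[simp]: "Rep_wo (Abs_wo i) = i"
  by (simp add: Abs_wo_inverse)

lemma absint_reidx:
  fixes f :: "real^'a::finite \<Rightarrow> real" and \<sigma> :: "'b::finite \<Rightarrow> 'a"
  assumes "\<And>i. \<sigma> (\<tau> i) = i" "\<And>j. \<tau> (\<sigma> j) = j"
    and fi: "f absolutely_integrable_on ball 0 1"
  shows "(f \<circ> reidx \<tau>) absolutely_integrable_on ball 0 1 \<and> integral (ball 0 1) (f \<circ> reidx \<tau>) = integral (ball 0 1) f"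
proof -
  have a: "(f has_integral integral (ball 0 1) f) (ball 0 1)"
    using fi unfolding absolutely_integrable_on_def by (simp add: has_integral_integral)
  have b: "((\<lambda>x. norm (f x)) has_integral integral (ball 0 1) (\<lambda>x. norm (f x))) (ball 0 1)"
    using fi unfolding absolutely_integrable_on_def by (simp add: has_integral_integral)
  have a': "((f \<circ> reidx \<tau>) has_integral integral (ball 0 1) f) (ball 0 1)"
    using twiddle_reidx[OF assms(1,2) a] .
  have b': "(((\<lambda>x. norm (f x)) \<circ> reidx \<tau>) has_integral integral (ball 0 1) (\<lambda>x. norm (f x))) (ball 0 1)"
    using twiddle_reidx[OF assms(1,2) b] .
  have "(f \<circ> reidx \<tau>) integrable_on ball 0 1" using a' by blast
  moreover have "(\<lambda>x. norm ((f \<circ> reidx \<tau>) x)) integrable_on ball 0 1" using b' by (auto simp: o_def)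
  moreover have "integral (ball 0 1) (f \<circ> reidx \<tau>) = integral (ball 0 1) f" using a' by (rule integral_unique)
  ultimately show ?thesis unfolding absolutely_integrable_on_def by blast
qed

lemma orth_inv:
  fixes F :: "real^'n::finite \<Rightarrow> real" and T :: "real^'n \<Rightarrow> real^'n"
  assumes T: "orthogonal_transformation T" and F: "F absolutely_integrable_on ball 0 1"
  shows "(F \<circ> T) absolutely_integrable_on ball 0 1 \<and> integral (ball 0 1) (F \<circ> T) = integral (ball 0 1) F"
proof -
  let ?P = "reidx (Rep_wo :: 'n wo \<Rightarrow> 'n)"
  let ?Q = "reidx (Abs_wo :: 'n \<Rightarrow> 'n wo)"
  have PQ: "\<And>y. ?P (?Q y) = y" by (rule reidx_comp) (simp add: Rep_wo_inverse)
  have QP: "\<And>x. ?Q (?P x) = x" by (rule reidx_comp) simp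
  define T' where "T' = ?P \<circ> T \<circ> ?Q"
  have bR: "bij (Rep_wo :: 'n wo \<Rightarrow> 'n)" by (metis Rep_Abs_wo Rep_wo_inverse bijI')
  have bA: "bij (Abs_wo :: 'n \<Rightarrow> 'n wo)" by (metis Rep_Abs_wo Rep_wo_inverse bijI')
  have T'o: "orthogonal_transformation T'"
    unfolding orthogonal_transformation T'_def
  proof
    show "linear (?P \<circ> T \<circ> ?Q)"
      using linear_compose[OF reidx_linear linear_compose[OF orthogonal_transformation_linear[OF T] reidx_linear]]
      by (simp add: comp_assoc)
    show "\<forall>v. norm ((?P \<circ> T \<circ> ?Q) v) = norm v"
      by (simp add: reidx_norm[OF bR] reidx_norm[OF bA] orthogonal_transformation_norm[OF T])
  qed
  have FQ: "(F \<circ> ?Q) absolutely_integrable_on ball 0 1 \<and> integral (ball 0 1) (F \<circ> ?Q) = integral (ball 0 1) F"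
    by (rule absint_reidx[where \<sigma> = "Rep_wo", OF _ _ F]) (simp_all add: Rep_wo_inverse)
  have W: "(F \<circ> ?Q \<circ> T') absolutely_integrable_on ball 0 1 \<and> integral (ball 0 1) (F \<circ> ?Q \<circ> T') = integral (ball 0 1) (F \<circ> ?Q)"
    using inv_wellorder[OF T'o] FQ by blast
  have eq: "F \<circ> ?Q \<circ> T' = F \<circ> T \<circ> ?Q" by (auto simp: T'_def QP)
  have bk: "(F \<circ> T \<circ> ?Q \<circ> ?P) absolutely_integrable_on ball 0 1 \<and> integral (ball 0 1) (F \<circ> T \<circ> ?Q \<circ> ?P) = integral (ball 0 1) (F \<circ> T \<circ> ?Q)"
    by (rule absint_reidx[where \<sigma> = "Abs_wo", OF _ _ W[unfolded eq, THEN conjunct1]]) (simp_all add: Rep_wo_inverse)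
  have eq2: "F \<circ> T \<circ> ?Q \<circ> ?P = F \<circ> T" by (auto simp: QP)
  show ?thesis using bk W FQ unfolding eq2 eq by simp
qed



abbreviation "cnt \<equiv> Henstock_Kurzweil_Integration.content"

lemma nz_in_cball: "norm (x /\<^sub>R norm x) \<le> (1::real)"
  by (cases "x = 0") auto

lemma nz_sphere: "x \<noteq> 0 \<Longrightarrow> x /\<^sub>R norm x \<in> sphere 0 (1::real)"
  by simp

lemma absint_nz:
  fixes f :: "real^'n \<Rightarrow> real"
  assumes f: "continuous_on UNIV f" and S: "S \<in> lmeasurable"
  shows "(\<lambda>x. f (x /\<^sub>R norm x)) absolutely_integrable_on S"
proof -
  have fb: "f \<in> borel_measurable borel" using f borel_measurable_continuous_onI by blast
  have m: "(\<lambda>x. f (x /\<^sub>R norm x)) \<in> borel_measurable borel" using fb by measurable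
  have m2: "(\<lambda>x. f (x /\<^sub>R norm x)) \<in> borel_measurable (lebesgue_on S)"
    using m by (simp add: measurable_completion measurable_restrict_space1)
  have "compact (f ` cball 0 1)"
    using compact_continuous_image[OF continuous_on_subset[OF f] compact_cball] by blast
  then obtain B where B: "\<And>y. y \<in> f ` cball 0 1 \<Longrightarrow> norm y \<le> B"
    using compact_imp_bounded bounded_iff by metis
  have bnd: "norm (f (x /\<^sub>R norm x)) \<le> B" for x :: "real^'n"
    using B nz_in_cball[of x] by auto
  show ?thesis
    by (rule measurable_bounded_by_integrable_imp_absolutely_integrable[OF m2 _ integrable_on_const[OF S] bnd])
       (use S in auto)
qed

lemma int_nz:
  fixes f :: "real^'n \<Rightarrow> real"
  assumes f: "continuous_on UNIV f"
  shows "(\<lambda>x. f (x /\<^sub>R norm x)) integrable_on ball 0 1"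
  using absint_nz[OF f lmeasurable_ball] absolutely_integrable_on_def by blast

lemma cnt_pos: "cnt (ball (0::real^'n) 1) > 0"
  by simp

lemma avg_add:
  fixes f g :: "real^'n \<Rightarrow> real"
  assumes "continuous_on UNIV f" "continuous_on UNIV g"
  shows "sphere_avg (\<lambda>x. f x + g x) = sphere_avg f + sphere_avg g"
  unfolding sphere_avg_def
  using integral_add[OF int_nz[OF assms(1)] int_nz[OF assms(2)]] by (simp add: add_divide_distrib)

lemma avg_cmul:
  fixes f :: "real^'n \<Rightarrow> real"
  shows "sphere_avg (\<lambda>x. c * f x) = c * sphere_avg f"
  unfolding sphere_avg_def by simp

lemma avg_sum:
  fixes f :: "'i \<Rightarrow> real^'n \<Rightarrow> real"
  assumes "finite I" "\<And>i. i \<in> I \<Longrightarrow> continuous_on UNIV (f i)"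
  shows "sphere_avg (\<lambda>x. \<Sum>i\<in>I. f i x) = (\<Sum>i\<in>I. sphere_avg (f i))"
  using assms
proof (induction I rule: finite_induct)
  case empty
  then show ?case by (simp add: sphere_avg_def)
next
  case (insert a I)
  have c: "continuous_on UNIV (\<lambda>x. \<Sum>i\<in>I. f i x)"
    using insert by (intro continuous_intros) auto
  have "sphere_avg (\<lambda>x. \<Sum>i\<in>insert a I. f i x) = sphere_avg (\<lambda>x. f a x + (\<Sum>i\<in>I. f i x))"
    using insert by simp
  also have "\<dots> = sphere_avg (f a) + sphere_avg (\<lambda>x. \<Sum>i\<in>I. f i x)"
    using avg_add[OF _ c] insert by simp
  finally show ?case using insert by simp
qed

lemma avg_const: "sphere_avg (\<lambda>x::real^'n. c) = c"
proof -
  have "integral (ball (0::real^'n) 1) (\<lambda>x. c) = c * cnt (ball (0::real^'n) 1)"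
    using lmeasure_integral[OF lmeasurable_ball, of "0::real^'n" 1] integral_mult_right[of "ball (0::real^'n) 1" c "\<lambda>x. 1"]
    by simp
  then show ?thesis unfolding sphere_avg_def using cnt_pos[where 'n='n] by simp
qed

lemma avg_cong:
  fixes f g :: "real^'n \<Rightarrow> real"
  assumes "\<And>x. x \<in> sphere 0 1 \<Longrightarrow> f x = g x"
  shows "sphere_avg f = sphere_avg g"
proof -
  have "integral (ball 0 1) (\<lambda>x. f (x /\<^sub>R norm x)) = integral (ball 0 1) (\<lambda>x::real^'n. g (x /\<^sub>R norm x))"
    by (rule integral_spike[of "{0}"]) (use assms in auto)
  then show ?thesis unfolding sphere_avg_def by simp
qed

lemma avg_nonneg:
  fixes f :: "real^'n \<Rightarrow> real"
  assumes f: "continuous_on UNIV f" and nn: "\<And>x. x \<in> sphere 0 1 \<Longrightarrow> 0 \<le> f x"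
  shows "0 \<le> sphere_avg f"
proof -
  let ?h = "\<lambda>x::real^'n. if x = 0 then 0 else f (x /\<^sub>R norm x)"
  have "integral (ball 0 1) (\<lambda>x. f (x /\<^sub>R norm x)) = integral (ball 0 1) ?h"
    by (rule integral_spike[of "{0}"]) auto
  moreover have "?h integrable_on ball 0 1"
    by (rule integrable_spike[OF int_nz[OF f] negligible_sing[of 0]]) auto
  moreover have "0 \<le> integral (ball 0 1) ?h"
    by (rule integral_nonneg[OF calculation(2)]) (use nn in auto)
  ultimately show ?thesis unfolding sphere_avg_def using cnt_pos[where 'n='n] by simp
qed

lemma avg_mono:
  fixes f g :: "real^'n \<Rightarrow> real"
  assumes "continuous_on UNIV f" "continuous_on UNIV g" "\<And>x. x \<in> sphere 0 1 \<Longrightarrow> f x \<le> g x"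
  shows "sphere_avg f \<le> sphere_avg g"
proof -
  have "0 \<le> sphere_avg (\<lambda>x. g x + (-1) * f x)"
    by (rule avg_nonneg) (use assms in \<open>auto intro!: continuous_intros\<close>)
  also have "\<dots> = sphere_avg g + (-1) * sphere_avg f"
    using avg_add[of g "\<lambda>x. (-1) * f x"] avg_cmul[of "-1" f] assms
    by (auto intro!: continuous_intros)
  finally show ?thesis by simp
qed



lemma avg_orth:
  fixes f :: "real^'n \<Rightarrow> real" and T :: "real^'n \<Rightarrow> real^'n"
  assumes f: "continuous_on UNIV f" and T: "orthogonal_transformation T"
  shows "sphere_avg (\<lambda>x. f (T x)) = sphere_avg f"
proof -
  let ?F = "\<lambda>y::real^'n. f (y /\<^sub>R norm y)"
  have eq: "(\<lambda>x. f (T (x /\<^sub>R norm x))) = ?F \<circ> T"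
  proof
    fix x
    have "T (x /\<^sub>R norm x) = T x /\<^sub>R norm (T x)"
      using T by (simp add: orthogonal_transformation_norm linear_scale orthogonal_transformation_linear linear_cmul)
    then show "f (T (x /\<^sub>R norm x)) = (?F \<circ> T) x" by simp
  qed
  have "integral (ball 0 1) (?F \<circ> T) = integral (ball 0 1) ?F"
    using orth_inv[of T ?F] T absint_nz[OF f lmeasurable_ball[of 0 1]] by blast
  then show ?thesis unfolding sphere_avg_def eq by simp
qed

lemma avg_sq_pos:
  fixes f :: "real^'n \<Rightarrow> real"
  assumes f: "continuous_on UNIV f" and y: "y \<in> sphere 0 1" and fy: "f y \<noteq> 0"
  shows "0 < sphere_avg (\<lambda>x. (f x)^2)"
proof -
  let ?h = "\<lambda>x. (f x)^2"
  have hc: "continuous_on UNIV ?h" using f by (intro continuous_intros)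
  have hy: "?h y > 0" using fy by simp
  have "continuous (at y) ?h" using hc by (simp add: continuous_on_eq_continuous_at)
  then obtain \<delta> where d: "\<delta> > 0" and dh: "\<And>z. dist z y < \<delta> \<Longrightarrow> dist (?h z) (?h y) < ?h y / 2"
    unfolding continuous_at_eps_delta using hy by (metis half_gt_zero)
  define r where "r = min (\<delta>/4) (1/4)"
  define c where "c = y /\<^sub>R 2"
  have r: "r > 0" "r \<le> \<delta>/4" "r \<le> 1/4" using d by (auto simp: r_def)
  have nc: "norm c = 1/2" using y by (simp add: c_def)
  let ?H = "\<lambda>x::real^'n. ?h (x /\<^sub>R norm x)"
  have Hbig: "?H x > ?h y / 2" if x: "x \<in> ball c r" for x
  proof -
    have dx: "norm (x - c) < r" using x by (simp add: dist_norm norm_minus_commute)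
    have "\<bar>norm x - norm c\<bar> \<le> norm (x - c)" by (rule norm_triangle_ineq3)
    then have nx: "\<bar>norm x - 1/2\<bar> < r" using dx nc by simp
    then have npos: "norm x > 0" using r by linarith
    have e1: "norm (x /\<^sub>R norm x - 2 *\<^sub>R x) = \<bar>1 - 2 * norm x\<bar>"
    proof -
      have "x /\<^sub>R norm x - 2 *\<^sub>R x = (1 / norm x - 2) *\<^sub>R x" by (simp add: algebra_simps divide_inverse)
      then have "norm (x /\<^sub>R norm x - 2 *\<^sub>R x) = \<bar>1 / norm x - 2\<bar> * norm x" by simp
      also have "\<dots> = \<bar>(1 / norm x - 2) * norm x\<bar>" using npos by (simp add: abs_mult)
      also have "(1 / norm x - 2) * norm x = 1 - 2 * norm x" using npos by (simp add: field_simps)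
      finally show ?thesis .
    qed
    have e2: "norm (2 *\<^sub>R x - y) = 2 * norm (x - c)"
    proof -
      have "2 *\<^sub>R x - y = 2 *\<^sub>R (x - c)" by (simp add: c_def algebra_simps)
      then show ?thesis by simp
    qed
    have "norm (x /\<^sub>R norm x - y) \<le> norm (x /\<^sub>R norm x - 2 *\<^sub>R x) + norm (2 *\<^sub>R x - y)"
      using norm_triangle_ineq[of "x /\<^sub>R norm x - 2 *\<^sub>R x" "2 *\<^sub>R x - y"] by simp
    also have "\<dots> < 4 * r" using e1 e2 nx dx by linarith
    finally have "dist (x /\<^sub>R norm x) y < \<delta>" using r by (simp add: dist_norm)
    then have "dist (?H x) (?h y) < ?h y / 2" using dh by blast
    then have "\<bar>?H x - ?h y\<bar> < ?h y / 2" by (simp add: dist_real_def)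
    then show ?thesis by linarith
  qed
  have sub: "ball c r \<subseteq> ball (0::real^'n) 1"
  proof
    fix x assume "x \<in> ball c r"
    then have "norm (x - c) < r" by (simp add: dist_norm norm_minus_commute)
    moreover have "norm x \<le> norm c + norm (x - c)" using norm_triangle_ineq[of c "x - c"] by simp
    ultimately show "x \<in> ball 0 1" using nc r by simp
  qed
  have i1: "?H integrable_on ball c r" using absint_nz[OF hc lmeasurable_ball] absolutely_integrable_on_def by blast
  have i2: "?H integrable_on ball 0 1" using int_nz[OF hc] .
  have "integral (ball c r) (\<lambda>x. ?h y / 2) \<le> integral (ball c r) ?H"
    by (rule integral_le[OF integrable_on_const[OF lmeasurable_ball] i1]) (use Hbig in force)
  also have "\<dots> \<le> integral (ball 0 1) ?H"
    by (rule integral_subset_le[OF sub i1 i2]) simp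
  finally have le: "integral (ball c r) (\<lambda>x. ?h y / 2) \<le> integral (ball 0 1) ?H" .
  have "integral (ball c r) (\<lambda>x. ?h y / 2) = ?h y / 2 * measure lebesgue (ball c r)"
    using lmeasure_integral[OF lmeasurable_ball, of c r] integral_mult_right[of "ball c r" "?h y / 2" "\<lambda>x. 1"]
    by simp
  moreover have "measure lebesgue (ball c r) > 0" using r content_ball_gt_0_iff[of c r] by simp
  ultimately have "integral (ball c r) (\<lambda>x. ?h y / 2) > 0" using hy by simp
  then have "integral (ball 0 1) ?H > 0" using le by linarith
  then show ?thesis unfolding sphere_avg_def using cnt_pos[where 'n='n] by simp
qed

lemma avg_sq_zero:
  fixes f :: "real^'n \<Rightarrow> real"
  assumes f: "continuous_on UNIV f" and "sphere_avg (\<lambda>x. (f x)^2) = 0" and "y \<in> sphere 0 1"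
  shows "f y = 0"
  using avg_sq_pos[OF f assms(3)] assms(2) by force



definition Ad :: "nat \<Rightarrow> ('n::finite \<Rightarrow> nat) set" where
  "Ad m = {\<alpha>. sum \<alpha> UNIV = m}"

definition mnm :: "('n::finite \<Rightarrow> nat) \<Rightarrow> real^'n \<Rightarrow> real" where
  "mnm \<alpha> x = (\<Prod>i\<in>UNIV. (x $ i) ^ (\<alpha> i))"

definition inV :: "nat \<Rightarrow> (real^'n::finite \<Rightarrow> real) \<Rightarrow> bool" where
  "inV m f \<longleftrightarrow> (\<exists>c. f = hom_poly m c)"

lemma hom_poly_alt: "hom_poly m c x = (\<Sum>\<alpha>\<in>Ad m. c \<alpha> * mnm \<alpha> x)"
  by (simp add: hom_poly_def Ad_def mnm_def)

lemma finite_Ad: "finite (Ad m :: ('n::finite \<Rightarrow> nat) set)"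
proof -
  have "Ad m \<subseteq> Pi\<^sub>E (UNIV::'n set) (\<lambda>_. {..m})"
  proof
    fix \<alpha> :: "'n \<Rightarrow> nat" assume "\<alpha> \<in> Ad m"
    then have "\<alpha> i \<le> m" for i unfolding Ad_def using member_le_sum[of i UNIV \<alpha>] by auto
    then show "\<alpha> \<in> Pi\<^sub>E UNIV (\<lambda>_. {..m})" by (auto simp: PiE_iff)
  qed
  moreover have "finite (Pi\<^sub>E (UNIV::'n set) (\<lambda>_. {..m}))" by (rule finite_PiE) auto
  ultimately show ?thesis using finite_subset by blast
qed

lemma inV_zero: "inV m (\<lambda>x. 0)"
  unfolding inV_def by (rule exI[of _ "\<lambda>_. 0"]) (simp add: fun_eq_iff hom_poly_def)

lemma inV_add: "inV m f \<Longrightarrow> inV m g \<Longrightarrow> inV m (\<lambda>x. f x + g x)"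
  unfolding inV_def
proof (elim exE)
  fix c d assume "f = hom_poly m c" "g = hom_poly m d"
  then show "\<exists>e. (\<lambda>x. f x + g x) = hom_poly m e"
    by (intro exI[of _ "\<lambda>\<alpha>. c \<alpha> + d \<alpha>"]) (simp add: fun_eq_iff hom_poly_def sum.distrib distrib_right)
qed

lemma inV_cmul: "inV m f \<Longrightarrow> inV m (\<lambda>x. a * f x)"
  unfolding inV_def
proof (elim exE)
  fix c assume "f = hom_poly m c"
  then show "\<exists>e. (\<lambda>x. a * f x) = hom_poly m e"
    by (intro exI[of _ "\<lambda>\<alpha>. a * c \<alpha>"]) (simp add: fun_eq_iff hom_poly_def sum_distrib_left mult.assoc)
qed

lemma inV_sum: "finite I \<Longrightarrow> (\<And>i. i \<in> I \<Longrightarrow> inV m (f i)) \<Longrightarrow> inV m (\<lambda>x. \<Sum>i\<in>I. f i x)"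
proof (induction I rule: finite_induct)
  case empty then show ?case by (simp add: inV_zero)
next
  case (insert a I) then show ?case by (simp add: inV_add)
qed

lemma inV_mono: "\<alpha> \<in> Ad m \<Longrightarrow> inV m (mnm \<alpha>)"
  unfolding inV_def
proof (intro exI[of _ "\<lambda>\<beta>. if \<beta> = \<alpha> then 1 else 0"] ext)
  fix x assume a: "\<alpha> \<in> Ad m"
  have "hom_poly m (\<lambda>\<beta>. if \<beta> = \<alpha> then 1 else 0) x = (\<Sum>\<beta>\<in>Ad m. if \<beta> = \<alpha> then mnm \<beta> x else 0)"
    unfolding hom_poly_alt by (rule sum.cong) auto
  also have "\<dots> = mnm \<alpha> x" using a sum.delta[OF finite_Ad[of m], where a=\<alpha> and b="\<lambda>\<beta>. mnm \<beta> x"] by simp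
  finally show "mnm \<alpha> x = hom_poly m (\<lambda>\<beta>. if \<beta> = \<alpha> then 1 else 0) x" by simp
qed

lemma mnm_add: "mnm \<alpha> x * mnm \<beta> x = mnm (\<lambda>i. \<alpha> i + \<beta> i) x"
  by (simp add: mnm_def power_add prod.distrib)

lemma Ad_add: "\<alpha> \<in> Ad a \<Longrightarrow> \<beta> \<in> Ad b \<Longrightarrow> (\<lambda>i. \<alpha> i + \<beta> i) \<in> Ad (a + b)"
  by (simp add: Ad_def sum.distrib)

lemma inV_mult:
  assumes "inV a f" "inV b g"
  shows "inV (a + b) (\<lambda>x. f x * g x)"
proof -
  obtain c d where f: "f = hom_poly a c" and g: "g = hom_poly b d" using assms inV_def by metis
  have eq: "(\<lambda>x. f x * g x) = (\<lambda>x. \<Sum>\<alpha>\<in>Ad a. \<Sum>\<beta>\<in>Ad b. (c \<alpha> * d \<beta>) * mnm (\<lambda>i. \<alpha> i + \<beta> i) x)"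
    by (simp add: fun_eq_iff f g hom_poly_alt sum_product mnm_add[symmetric] mult_ac)
  show ?thesis unfolding eq
    by (intro inV_sum finite_Ad inV_cmul inV_mono Ad_add)
qed

lemma inV_one: "inV 0 (\<lambda>x::real^'n::finite. 1)"
proof -
  have "inV 0 (mnm (\<lambda>_::'n. 0))" by (rule inV_mono) (simp add: Ad_def)
  moreover have "mnm (\<lambda>_::'n. 0) = (\<lambda>x::real^'n. 1)" by (simp add: fun_eq_iff mnm_def)
  ultimately show ?thesis by metis
qed

lemma inV_prod: "finite I \<Longrightarrow> (\<And>i. i \<in> I \<Longrightarrow> inV (d i) (f i)) \<Longrightarrow> inV (\<Sum>i\<in>I. d i) (\<lambda>x. \<Prod>i\<in>I. f i x)"
proof (induction I rule: finite_induct)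
  case empty then show ?case by (simp add: inV_one)
next
  case (insert a I) then show ?case by (simp add: inV_mult)
qed

lemma inV_pow: "inV d f \<Longrightarrow> inV (k * d) (\<lambda>x. f x ^ k)"
proof (induction k)
  case 0 then show ?case by (simp add: inV_one)
next
  case (Suc k)
  then have "inV (d + k * d) (\<lambda>x. f x * f x ^ k)" by (intro inV_mult) auto
  then show ?case by (simp add: add.commute)
qed

lemma inV_coord: "inV 1 (\<lambda>x::real^'n::finite. x $ j)"
proof -
  have "inV 1 (mnm (\<lambda>i::'n. if i = j then 1 else 0))"
    by (rule inV_mono) (simp add: Ad_def sum.delta)
  moreover have "mnm (\<lambda>i::'n. if i = j then 1 else 0) = (\<lambda>x::real^'n. x $ j)"
  proof
    fix x :: "real^'n"
    have "mnm (\<lambda>i::'n. if i = j then 1 else 0) x = (\<Prod>i\<in>UNIV. if i = j then x $ i else 1)"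
      unfolding mnm_def by (rule prod.cong) auto
    also have "\<dots> = x $ j" by (subst prod.delta) auto
    finally show "mnm (\<lambda>i::'n. if i = j then 1 else 0) x = x $ j" .
  qed
  ultimately show ?thesis by simp
qed

lemma inV_comp_linear:
  fixes T :: "real^'n::finite \<Rightarrow> real^'n"
  assumes T: "linear T" and f: "inV m f"
  shows "inV m (\<lambda>x. f (T x))"
proof -
  obtain c where fc: "f = hom_poly m c" using f inV_def by metis
  have Ti: "T x $ i = (\<Sum>j\<in>UNIV. matrix T $ i $ j * x $ j)" for x i
  proof -
    have "T x = matrix T *v x" using fun_cong[OF matrix_vector_mul(2)[OF T], of x] by simp
    then show ?thesis by (simp add: matrix_vector_mult_def)
  qed
  have lin: "inV 1 (\<lambda>x. T x $ i)" for i
    unfolding Ti by (rule inV_sum[OF finite]) (rule inV_cmul[OF inV_coord])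
  have P: "inV (\<Sum>i\<in>UNIV. \<alpha> i * 1) (\<lambda>x. \<Prod>i\<in>UNIV. (T x $ i) ^ \<alpha> i)" for \<alpha> :: "'n \<Rightarrow> nat"
    by (rule inV_prod[OF finite]) (rule inV_pow[OF lin])
  have mnm_T: "inV m (\<lambda>x. mnm \<alpha> (T x))" if a: "\<alpha> \<in> Ad m" for \<alpha>
  proof -
    have "(\<Sum>i\<in>UNIV. \<alpha> i * 1) = m" using a by (simp add: Ad_def)
    moreover have "(\<lambda>x. mnm \<alpha> (T x)) = (\<lambda>x. \<Prod>i\<in>UNIV. (T x $ i) ^ \<alpha> i)" by (simp add: mnm_def)
    ultimately show ?thesis using P[of \<alpha>] by simp
  qed
  have "inV m (\<lambda>x. \<Sum>\<alpha>\<in>Ad m. c \<alpha> * mnm \<alpha> (T x))"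
    by (rule inV_sum[OF finite_Ad]) (rule inV_cmul[OF mnm_T])
  then show ?thesis by (simp add: fc hom_poly_alt)
qed

lemma hom_poly_cont: "continuous_on UNIV (hom_poly m c :: real^'n::finite \<Rightarrow> real)"
proof -
  have eq: "hom_poly m c = (\<lambda>x::real^'n. \<Sum>\<alpha>\<in>Ad m. c \<alpha> * (\<Prod>i\<in>UNIV. (x $ i) ^ (\<alpha> i)))"
    by (simp add: fun_eq_iff hom_poly_alt mnm_def)
  have ci: "continuous_on UNIV (\<lambda>x::real^'n. x $ i)" for i
    by (rule continuous_on_component[OF continuous_on_id])
  show ?thesis unfolding eq
    by (rule continuous_on_sum, rule continuous_on_mult[OF continuous_on_const],
        rule continuous_on_prod, rule continuous_on_power[OF ci])
qed

lemma inV_cont: "inV m f \<Longrightarrow> continuous_on UNIV f"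
  unfolding inV_def using hom_poly_cont by metis



definition ON :: "nat \<Rightarrow> nat \<Rightarrow> (nat \<Rightarrow> real^'n::finite \<Rightarrow> real) \<Rightarrow> bool" where
  "ON m r e \<longleftrightarrow> (\<forall>i<r. inV m (e i)) \<and>
     (\<forall>i<r. \<forall>j<r. sphere_avg (\<lambda>x. e i x * e j x) = (if i = j then 1 else 0))"

lemma inV_comb:
  assumes H: "\<And>i. i < (r::nat) \<Longrightarrow> inV m (e i)"
  shows "inV m (\<lambda>x. \<Sum>j<r. b j * e j x)"
proof -
  have "\<And>j. j \<in> {..<r} \<Longrightarrow> inV m (\<lambda>x. b j * e j x)"
    by (rule inV_cmul[OF H]) simp
  then show ?thesis using inV_sum[of "{..<r}" m "\<lambda>j x. b j * e j x"] finite_lessThan[of r] by blast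
qed

lemma cont_comb: "(\<And>i. i < (r::nat) \<Longrightarrow> inV m (e i)) \<Longrightarrow> continuous_on UNIV (\<lambda>x. \<Sum>j<r. b j * e j x)"
  by (rule inV_cont[OF inV_comb])

lemma inV_diff: "inV m f \<Longrightarrow> inV m g \<Longrightarrow> inV m (\<lambda>x. f x - g x)"
  using inV_add[of m f "\<lambda>x. (-1) * g x"] inV_cmul[of m g "-1"] by simp

lemma avg_diff:
  fixes f g :: "real^'n::finite \<Rightarrow> real"
  assumes "continuous_on UNIV f" "continuous_on UNIV g"
  shows "sphere_avg (\<lambda>x. f x - g x) = sphere_avg f - sphere_avg g"
proof -
  have "sphere_avg (\<lambda>x. f x + (-1) * g x) = sphere_avg f + sphere_avg (\<lambda>x. (-1) * g x)"
    by (rule avg_add[OF assms(1)]) (rule continuous_on_mult[OF continuous_on_const assms(2)])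
  then show ?thesis using avg_cmul[of "-1" g] by simp
qed

lemma ON_coef:
  assumes on: "ON m r e" and i: "i < r"
  shows "sphere_avg (\<lambda>x. e i x * (\<Sum>j<r. a j * e j x)) = a i"
proof -
  have inv: "\<And>j. j < r \<Longrightarrow> inV m (e j)" using on ON_def by blast
  have "(\<lambda>x. e i x * (\<Sum>j<r. a j * e j x)) = (\<lambda>x. \<Sum>j<r. a j * (e i x * e j x))"
    by (simp add: sum_distrib_left mult_ac)
  then have "sphere_avg (\<lambda>x. e i x * (\<Sum>j<r. a j * e j x)) = (\<Sum>j<r. sphere_avg (\<lambda>x. a j * (e i x * e j x)))"
    using avg_sum[of "{..<r}" "\<lambda>j x. a j * (e i x * e j x)"]
      inV_cont[OF inV_cmul[OF inV_mult[OF inv[OF i] inv]]] by simp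
  also have "\<dots> = (\<Sum>j<r. a j * (if i = j then 1 else 0))"
    using on i unfolding ON_def by (simp add: avg_cmul)
  also have "\<dots> = a i" using i by (simp add: if_distrib sum.delta cong: if_cong)
  finally show ?thesis .
qed

lemma ON_inner:
  assumes on: "ON m r e"
  shows "sphere_avg (\<lambda>x. (\<Sum>i<r. a i * e i x) * (\<Sum>j<r. b j * e j x)) = (\<Sum>i<r. a i * b i)"
proof -
  have inv: "\<And>j. j < r \<Longrightarrow> inV m (e j)" using on ON_def by blast
  have "(\<lambda>x. (\<Sum>i<r. a i * e i x) * (\<Sum>j<r. b j * e j x)) = (\<lambda>x. \<Sum>i<r. a i * (e i x * (\<Sum>j<r. b j * e j x)))"
    by (simp add: sum_distrib_right mult_ac)
  then have "sphere_avg (\<lambda>x. (\<Sum>i<r. a i * e i x) * (\<Sum>j<r. b j * e j x)) = (\<Sum>i<r. sphere_avg (\<lambda>x. a i * (e i x * (\<Sum>j<r. b j * e j x))))"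
  proof -
    have "\<And>i. i \<in> {..<r} \<Longrightarrow> continuous_on UNIV (\<lambda>x. a i * (e i x * (\<Sum>j<r. b j * e j x)))"
    proof -
      fix i assume "i \<in> {..<r}"
      then have i: "i < r" by simp
      show "continuous_on UNIV (\<lambda>x. a i * (e i x * (\<Sum>j<r. b j * e j x)))"
        by (rule inV_cont[OF inV_cmul[OF inV_mult[OF inv[OF i] inV_comb[OF inv]]]])
    qed
    from avg_sum[OF finite_lessThan this] show ?thesis
      using \<open>(\<lambda>x. (\<Sum>i<r. a i * e i x) * (\<Sum>j<r. b j * e j x)) = _\<close> by simp
  qed
  also have "\<dots> = (\<Sum>i<r. a i * b i)"
    using ON_coef[OF on] by (simp add: avg_cmul)
  finally show ?thesis .
qed

lemma GS:
  assumes "finite B" "B \<subseteq> Ad m"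
  shows "\<exists>r e. r \<le> card B \<and> ON m r (e :: nat \<Rightarrow> real^'n::finite \<Rightarrow> real) \<and>
     (\<forall>\<alpha>\<in>B. \<exists>a. \<forall>x\<in>sphere 0 1. mnm \<alpha> x = (\<Sum>i<r. a i * e i x))"
  using assms
proof (induction B rule: finite_induct)
  case empty
  show ?case by (rule exI[of _ 0], rule exI[of _ "\<lambda>_ _. 0"]) (simp add: ON_def)
next
  case (insert \<alpha> B)
  then obtain r and e :: "nat \<Rightarrow> real^'n \<Rightarrow> real" where
    rB: "r \<le> card B" and on: "ON m r e" and sp: "\<forall>\<beta>\<in>B. \<exists>a. \<forall>x\<in>sphere 0 1. mnm \<beta> x = (\<Sum>i<r. a i * e i x)"
    by auto
  have inv: "\<And>j. j < r \<Longrightarrow> inV m (e j)" using on ON_def by blast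
  have cardI: "card (insert \<alpha> B) = Suc (card B)" using insert by simp
  let ?g = "mnm \<alpha> :: real^'n \<Rightarrow> real"
  have gV: "inV m ?g" using insert inV_mono by blast
  define b where "b i = sphere_avg (\<lambda>x. e i x * ?g x)" for i
  define h where "h x = ?g x - (\<Sum>i<r. b i * e i x)" for x
  have hV: "inV m h" unfolding h_def by (rule inV_diff[OF gV inV_comb[OF inv]])
  have hc: "continuous_on UNIV h" using inV_cont[OF hV] .
  have orth: "sphere_avg (\<lambda>x. e i x * h x) = 0" if i: "i < r" for i
  proof -
    have "sphere_avg (\<lambda>x. e i x * h x) = sphere_avg (\<lambda>x. e i x * ?g x - e i x * (\<Sum>j<r. b j * e j x))"
      by (simp add: h_def right_diff_distrib)
    also have "\<dots> = sphere_avg (\<lambda>x. e i x * ?g x) - sphere_avg (\<lambda>x. e i x * (\<Sum>j<r. b j * e j x))"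
    proof (rule avg_diff)
      show "continuous_on UNIV (\<lambda>x. e i x * ?g x)" using inV_cont[OF inV_mult[OF inv[OF i] gV]] .
      show "continuous_on UNIV (\<lambda>x. e i x * (\<Sum>j<r. b j * e j x))"
        using inV_cont[OF inV_mult[OF inv[OF i] inV_comb[OF inv]]] .
    qed
    also have "\<dots> = 0" using ON_coef[OF on i] b_def by simp
    finally show ?thesis .
  qed
  define N where "N = sphere_avg (\<lambda>x. (h x)^2)"
  have N0: "N \<ge> 0" unfolding N_def by (rule avg_nonneg) (auto intro: continuous_on_power hc)
  show ?case
  proof (cases "N = 0")
    case True
    have "sphere_avg (\<lambda>x. (h x)^2) = 0" using True N_def by simp
    then have hz: "\<And>x. x \<in> sphere 0 1 \<Longrightarrow> h x = 0" using avg_sq_zero[OF hc] by blast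
    show ?thesis
    proof (intro exI conjI)
      show "r \<le> card (insert \<alpha> B)" using rB cardI by simp
      show "ON m r e" by (rule on)
      show "\<forall>\<beta>\<in>insert \<alpha> B. \<exists>a. \<forall>x\<in>sphere 0 1. mnm \<beta> x = (\<Sum>i<r. a i * e i x)"
      proof
        fix \<beta> assume "\<beta> \<in> insert \<alpha> B"
        then consider "\<beta> = \<alpha>" | "\<beta> \<in> B" by blast
        then show "\<exists>a. \<forall>x\<in>sphere 0 1. mnm \<beta> x = (\<Sum>i<r. a i * e i x)"
        proof cases
          case 1
          show ?thesis using hz 1 by (intro exI[of _ b]) (auto simp: h_def)
        next
          case 2 then show ?thesis using sp by blast
        qed
      qed
    qed
  next
    case False
    then have Np: "N > 0" using N0 by simp
    define s where "s = sqrt N"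
    have sp0: "s > 0" using Np s_def by simp
    have ss: "s * s = N" using N0 s_def by simp
    define e' where "e' = e(r := (\<lambda>x. (1/s) * h x))"
    have e'_lt: "i < r \<Longrightarrow> e' i = e i" for i by (simp add: e'_def)
    have e'_r: "e' r = (\<lambda>x. (1/s) * h x)" by (simp add: e'_def)
    have on': "ON m (Suc r) e'"
      unfolding ON_def
    proof (intro conjI allI impI)
      fix i assume "i < Suc r"
      then show "inV m (e' i)"
      proof (cases "i = r")
        case True then show ?thesis by (simp only: True e'_r) (rule inV_cmul[OF hV])
      next
        case False then show ?thesis using \<open>i < Suc r\<close> inv e'_lt by simp
      qed
    next
      fix i j assume i: "i < Suc r" and j: "j < Suc r"
      show "sphere_avg (\<lambda>x. e' i x * e' j x) = (if i = j then 1 else 0)"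
      proof (cases "i = r")
        case ir: True
        show ?thesis
        proof (cases "j = r")
          case True
          have "sphere_avg (\<lambda>x. e' i x * e' j x) = sphere_avg (\<lambda>x. (1/s * 1/s) * (h x)^2)"
            using ir True e'_r by (simp add: power2_eq_square mult_ac)
          also have "\<dots> = (1/s * 1/s) * N" by (simp only: avg_cmul N_def)
          also have "\<dots> = 1" using ss sp0 Np by (simp add: field_simps)
          finally show ?thesis using ir True by simp
        next
          case False
          then have jr: "j < r" using j by simp
          have "sphere_avg (\<lambda>x. e' i x * e' j x) = sphere_avg (\<lambda>x. (1/s) * (e j x * h x))"
            using ir jr e'_r e'_lt by (simp add: mult_ac)
          also have "\<dots> = 0" using orth[OF jr] avg_cmul[of "1/s" "\<lambda>x. e j x * h x"] by simp
          finally show ?thesis using ir False by simp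
        qed
      next
        case False
        then have ir: "i < r" using i by simp
        show ?thesis
        proof (cases "j = r")
          case True
          have "sphere_avg (\<lambda>x. e' i x * e' j x) = sphere_avg (\<lambda>x. (1/s) * (e i x * h x))"
            using ir True e'_r e'_lt by (simp add: mult_ac)
          also have "\<dots> = 0" using orth[OF ir] avg_cmul[of "1/s" "\<lambda>x. e i x * h x"] by simp
          finally show ?thesis using ir True by simp
        next
          case False
          then have jr: "j < r" using j by simp
          then show ?thesis using on ir e'_lt unfolding ON_def by simp
        qed
      qed
    qed
    show ?thesis
    proof (intro exI conjI)
      show "Suc r \<le> card (insert \<alpha> B)" using rB cardI by simp
      show "ON m (Suc r) e'" by (rule on')
      show "\<forall>\<beta>\<in>insert \<alpha> B. \<exists>a. \<forall>x\<in>sphere 0 1. mnm \<beta> x = (\<Sum>i<Suc r. a i * e' i x)"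
      proof
        fix \<beta> assume "\<beta> \<in> insert \<alpha> B"
        then consider "\<beta> = \<alpha>" | "\<beta> \<in> B" by blast
        then show "\<exists>a. \<forall>x\<in>sphere 0 1. mnm \<beta> x = (\<Sum>i<Suc r. a i * e' i x)"
        proof cases
          case 1
          show ?thesis
          proof (intro exI[of _ "b(r := s)"] ballI)
            fix x :: "real^'n"
            have "(\<Sum>i<Suc r. (b(r := s)) i * e' i x) = (\<Sum>i<r. b i * e i x) + s * ((1/s) * h x)"
              using e'_lt e'_r by simp
            also have "\<dots> = mnm \<beta> x" using sp0 1 by (simp add: h_def)
            finally show "mnm \<beta> x = (\<Sum>i<Suc r. (b(r := s)) i * e' i x)" by simp
          qed
        next
          case 2
          then obtain a where a: "\<forall>x\<in>sphere 0 1. mnm \<beta> x = (\<Sum>i<r. a i * e i x)" using sp by blast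
          show ?thesis
          proof (intro exI[of _ "a(r := 0)"] ballI)
            fix x :: "real^'n" assume x: "x \<in> sphere 0 1"
            have "(\<Sum>i<Suc r. (a(r := 0)) i * e' i x) = (\<Sum>i<r. a i * e i x)"
              using e'_lt by simp
            then show "mnm \<beta> x = (\<Sum>i<Suc r. (a(r := 0)) i * e' i x)" using a x by simp
          qed
        qed
      qed
    qed
  qed
qed



lemma ON_inV: "ON m r e \<Longrightarrow> i < r \<Longrightarrow> inV m (e i)"
  unfolding ON_def by blast

lemma span_all:
  fixes e :: "nat \<Rightarrow> real^'n::finite \<Rightarrow> real"
  assumes sp: "\<forall>\<alpha>\<in>Ad m. \<exists>a. \<forall>x\<in>sphere 0 1. mnm \<alpha> x = (\<Sum>i<r. a i * e i x)"
    and f: "inV m f"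
  shows "\<exists>a. \<forall>x\<in>sphere 0 1. f x = (\<Sum>i<r. a i * e i x)"
proof -
  obtain c where fc: "f = hom_poly m c" using f inV_def by metis
  from bchoice[OF sp] obtain A where A: "\<forall>\<alpha>\<in>Ad m. \<forall>x\<in>sphere 0 1. mnm \<alpha> x = (\<Sum>i<r. A \<alpha> i * e i x)"
    by blast
  show ?thesis
  proof (intro exI ballI)
    fix x :: "real^'n" assume x: "x \<in> sphere 0 1"
    have "f x = (\<Sum>\<alpha>\<in>Ad m. c \<alpha> * (\<Sum>i<r. A \<alpha> i * e i x))"
      unfolding fc hom_poly_alt using A x by (intro sum.cong) auto
    also have "\<dots> = (\<Sum>\<alpha>\<in>Ad m. \<Sum>i<r. c \<alpha> * A \<alpha> i * e i x)"
      by (simp add: sum_distrib_left mult_ac)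
    also have "\<dots> = (\<Sum>i<r. \<Sum>\<alpha>\<in>Ad m. c \<alpha> * A \<alpha> i * e i x)"
      by (rule sum.swap)
    also have "\<dots> = (\<Sum>i<r. (\<Sum>\<alpha>\<in>Ad m. c \<alpha> * A \<alpha> i) * e i x)"
      by (simp add: sum_distrib_right)
    finally show "f x = (\<Sum>i<r. (\<Sum>\<alpha>\<in>Ad m. c \<alpha> * A \<alpha> i) * e i x)" .
  qed
qed

lemma bessel:
  assumes on: "ON m r f" and v: "inV m v"
  shows "(\<Sum>i<r. (sphere_avg (\<lambda>x. f i x * v x))^2) \<le> sphere_avg (\<lambda>x. (v x)^2)"
proof -
  have fV: "\<And>i. i < r \<Longrightarrow> inV m (f i)" using on ON_inV by blast
  define c where "c i = sphere_avg (\<lambda>x. f i x * v x)" for i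
  define P where "P x = (\<Sum>i<r. c i * f i x)" for x
  have PV: "inV m P" unfolding P_def by (rule inV_comb[OF fV])
  have vc: "continuous_on UNIV v" using inV_cont[OF v] .
  have Pc: "continuous_on UNIV P" using inV_cont[OF PV] .
  have c1: "continuous_on UNIV (\<lambda>x. (v x)^2)" using inV_cont[OF inV_mult[OF v v]] by (simp add: power2_eq_square)
  have c2: "continuous_on UNIV (\<lambda>x. v x * P x)" using inV_cont[OF inV_mult[OF v PV]] .
  have c3: "continuous_on UNIV (\<lambda>x. P x * P x)" using inV_cont[OF inV_mult[OF PV PV]] .
  have vP: "sphere_avg (\<lambda>x. v x * P x) = (\<Sum>i<r. c i * c i)"
  proof -
    have "(\<lambda>x. v x * P x) = (\<lambda>x. \<Sum>i<r. c i * (f i x * v x))"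
      by (simp add: P_def sum_distrib_left mult_ac)
    moreover have "\<And>i. i \<in> {..<r} \<Longrightarrow> continuous_on UNIV (\<lambda>x. c i * (f i x * v x))"
      using inV_cont[OF inV_cmul[OF inV_mult[OF fV v]]] by simp
    ultimately have "sphere_avg (\<lambda>x. v x * P x) = (\<Sum>i<r. sphere_avg (\<lambda>x. c i * (f i x * v x)))"
      using avg_sum[OF finite_lessThan, of r "\<lambda>i x. c i * (f i x * v x)"] by simp
    also have "\<dots> = (\<Sum>i<r. c i * c i)" by (simp add: avg_cmul c_def)
    finally show ?thesis .
  qed
  have PP: "sphere_avg (\<lambda>x. P x * P x) = (\<Sum>i<r. c i * c i)"
    unfolding P_def by (rule ON_inner[OF on])
  have "0 \<le> sphere_avg (\<lambda>x. (v x - P x)^2)"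
    by (rule avg_nonneg) (auto intro!: continuous_on_power continuous_on_diff vc Pc)
  also have "(\<lambda>x. (v x - P x)^2) = (\<lambda>x. (v x)^2 + ((-2) * (v x * P x) + P x * P x))"
    by (simp add: power2_eq_square algebra_simps)
  also have "sphere_avg \<dots> = sphere_avg (\<lambda>x. (v x)^2) + (sphere_avg (\<lambda>x. (-2) * (v x * P x)) + sphere_avg (\<lambda>x. P x * P x))"
  proof -
    have "continuous_on UNIV (\<lambda>x. (-2) * (v x * P x))" by (rule continuous_on_mult[OF continuous_on_const c2])
    then have "sphere_avg (\<lambda>x. (-2) * (v x * P x) + P x * P x) = sphere_avg (\<lambda>x. (-2) * (v x * P x)) + sphere_avg (\<lambda>x. P x * P x)"
      by (rule avg_add[OF _ c3])
    moreover have "continuous_on UNIV (\<lambda>x. (-2) * (v x * P x) + P x * P x)"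
      by (rule continuous_on_add[OF continuous_on_mult[OF continuous_on_const c2] c3])
    ultimately show ?thesis using avg_add[OF c1] by simp
  qed
  also have "\<dots> = sphere_avg (\<lambda>x. (v x)^2) - (\<Sum>i<r. c i * c i)"
    using vP PP avg_cmul[of "-2" "\<lambda>x. v x * P x"] by simp
  finally show ?thesis by (simp add: c_def power2_eq_square)
qed

lemma key:
  fixes q :: "real^'n::finite \<Rightarrow> real"
  assumes qV: "inV m q" and x0: "x0 \<in> sphere 0 1"
  shows "(q x0)^2 \<le> real (card (Ad m :: ('n \<Rightarrow> nat) set)) * sphere_avg (\<lambda>x. (q x)^2)"
proof -
  obtain r and e :: "nat \<Rightarrow> real^'n \<Rightarrow> real" where
    rB: "r \<le> card (Ad m :: ('n \<Rightarrow> nat) set)" and on: "ON m r e" and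
    sp: "\<forall>\<alpha>\<in>Ad m. \<exists>a. \<forall>x\<in>sphere 0 1. mnm \<alpha> x = (\<Sum>i<r. a i * e i x)"
    using GS[OF finite_Ad subset_refl, of m] by blast
  have eV: "\<And>i. i < r \<Longrightarrow> inV m (e i)" using on ON_inV by blast
  define S where "S x = (\<Sum>i<r. e i x * e i x)" for x
  have Sinv: "S x0 \<le> S y" if y: "y \<in> sphere 0 1" for y
  proof -
    have "norm y = norm x0" using x0 y by simp
    then obtain T where T: "orthogonal_transformation T" and Ty: "T y = x0"
      using orthogonal_transformation_exists by metis
    have Tl: "linear T" using T orthogonal_transformation_linear by blast
    define f where "f i x = e i (T x)" for i x
    have fV: "\<And>i. i < r \<Longrightarrow> inV m (f i)"
      unfolding f_def by (rule inV_comp_linear[OF Tl eV])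
    have onf: "ON m r f"
      unfolding ON_def
    proof (intro conjI allI impI)
      fix i assume "i < r" then show "inV m (f i)" using fV by blast
    next
      fix i j assume i: "i < r" and j: "j < r"
      have "sphere_avg (\<lambda>x. f i x * f j x) = sphere_avg (\<lambda>x. e i x * e j x)"
        unfolding f_def
        by (rule avg_orth[OF inV_cont[OF inV_mult[OF eV[OF i] eV[OF j]]] T])
      then show "sphere_avg (\<lambda>x. f i x * f j x) = (if i = j then 1 else 0)"
        using on i j unfolding ON_def by simp
    qed
    define v where "v x = (\<Sum>j<r. e j y * e j x)" for x
    have vV: "inV m v" unfolding v_def by (rule inV_comb[OF eV])
    have "\<forall>i. \<exists>a. i < r \<longrightarrow> (\<forall>x\<in>sphere 0 1. f i x = (\<Sum>l<r. a l * e l x))"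
      using span_all[OF sp fV] by blast
    then obtain A where A: "\<And>i x. i < r \<Longrightarrow> x \<in> sphere 0 1 \<Longrightarrow> f i x = (\<Sum>l<r. A i l * e l x)"
      by metis
    have fy: "f i y = sphere_avg (\<lambda>x. f i x * v x)" if i: "i < r" for i
    proof -
      have "sphere_avg (\<lambda>x. f i x * v x) = sphere_avg (\<lambda>x. (\<Sum>l<r. A i l * e l x) * (\<Sum>j<r. e j y * e j x))"
        by (rule avg_cong) (use A[OF i] in \<open>simp add: v_def\<close>)
      also have "\<dots> = (\<Sum>l<r. A i l * e l y)" by (rule ON_inner[OF on])
      also have "\<dots> = f i y" using A[OF i y] by simp
      finally show ?thesis by simp
    qed
    have vv: "sphere_avg (\<lambda>x. (v x)^2) = S y"
      unfolding v_def S_def power2_eq_square by (rule ON_inner[OF on])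
    have "S x0 = (\<Sum>i<r. (f i y)^2)"
      by (simp add: S_def f_def Ty power2_eq_square)
    also have "\<dots> = (\<Sum>i<r. (sphere_avg (\<lambda>x. f i x * v x))^2)"
      using fy by simp
    also have "\<dots> \<le> sphere_avg (\<lambda>x. (v x)^2)" by (rule bessel[OF onf vV])
    finally show ?thesis using vv by simp
  qed
  have SV: "inV (m + m) S"
    unfolding S_def by (rule inV_sum[OF finite_lessThan]) (rule inV_mult[OF eV eV], simp, simp)
  have Sc: "continuous_on UNIV S" using inV_cont[OF SV] .
  have avgS: "sphere_avg S = real r"
  proof -
    have "\<And>i. i \<in> {..<r} \<Longrightarrow> continuous_on UNIV (\<lambda>x. e i x * e i x)"
      using inV_cont[OF inV_mult[OF eV eV]] by simp
    then have "sphere_avg S = (\<Sum>i<r. sphere_avg (\<lambda>x. e i x * e i x))"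
      unfolding S_def using avg_sum[OF finite_lessThan, of r "\<lambda>i x. e i x * e i x"] by simp
    also have "\<dots> = (\<Sum>i<r. 1)" using on unfolding ON_def by simp
    finally show ?thesis by simp
  qed
  have Sx0: "S x0 \<le> real r"
  proof -
    have "sphere_avg (\<lambda>x::real^'n. S x0) \<le> sphere_avg S"
      by (rule avg_mono[OF continuous_on_const Sc]) (use Sinv in simp)
    then show ?thesis using avgS avg_const[where 'n='n, of "S x0"] by simp
  qed
  obtain a where a: "\<forall>x\<in>sphere 0 1. q x = (\<Sum>i<r. a i * e i x)" using span_all[OF sp qV] by blast
  have aq: "sphere_avg (\<lambda>x. (q x)^2) = (\<Sum>i<r. a i * a i)"
  proof -
    have "sphere_avg (\<lambda>x. (q x)^2) = sphere_avg (\<lambda>x. (\<Sum>i<r. a i * e i x) * (\<Sum>i<r. a i * e i x))"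
      by (rule avg_cong) (use a in \<open>simp add: power2_eq_square\<close>)
    also have "\<dots> = (\<Sum>i<r. a i * a i)" by (rule ON_inner[OF on])
    finally show ?thesis .
  qed
  have "(q x0)^2 = (\<Sum>i<r. a i * e i x0)^2" using a x0 by simp
  also have "\<dots> \<le> (\<Sum>i<r. (a i)^2) * (\<Sum>i<r. (e i x0)^2)" by (rule Cauchy_Schwarz_ineq_sum)
  also have "\<dots> = sphere_avg (\<lambda>x. (q x)^2) * S x0" using aq by (simp add: S_def power2_eq_square)
  also have "\<dots> \<le> sphere_avg (\<lambda>x. (q x)^2) * real r"
  proof (rule mult_left_mono[OF Sx0])
    show "0 \<le> sphere_avg (\<lambda>x. (q x)^2)" using aq by (simp add: sum_nonneg)
  qed
  also have "\<dots> \<le> sphere_avg (\<lambda>x. (q x)^2) * real (card (Ad m :: ('n \<Rightarrow> nat) set))"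
    by (rule mult_left_mono) (use rB aq in \<open>simp_all add: sum_nonneg\<close>)
  finally show ?thesis by (simp add: mult.commute)
qed



lemma card_Ad: "card (Ad m :: ('n::finite \<Rightarrow> nat) set) \<le> (m + 1) ^ (CARD('n) - 1)"
proof -
  obtain i0 :: 'n where True by blast
  define J where "J = (UNIV :: 'n set) - {i0}"
  define \<phi> where "\<phi> \<alpha> = restrict \<alpha> J" for \<alpha> :: "'n \<Rightarrow> nat"
  have split: "sum \<alpha> UNIV = \<alpha> i0 + sum \<alpha> J" for \<alpha> :: "'n \<Rightarrow> nat"
    unfolding J_def by (rule sum.remove) auto
  have inj: "inj_on \<phi> (Ad m)"
  proof
    fix \<alpha> \<beta> assume a: "\<alpha> \<in> Ad m" and b: "\<beta> \<in> Ad m" and eq: "\<phi> \<alpha> = \<phi> \<beta>"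
    have oth: "\<alpha> i = \<beta> i" if "i \<in> J" for i
      using fun_cong[OF eq, of i] that by (simp add: \<phi>_def)
    then have "sum \<alpha> J = sum \<beta> J" by (rule sum.cong[OF refl])
    moreover have "sum \<alpha> UNIV = sum \<beta> UNIV" using a b by (simp add: Ad_def)
    ultimately have "\<alpha> i0 = \<beta> i0" using split[of \<alpha>] split[of \<beta>] by simp
    then show "\<alpha> = \<beta>" using oth by (metis Diff_iff J_def UNIV_I ext singletonD)
  qed
  have img: "\<phi> ` Ad m \<subseteq> Pi\<^sub>E J (\<lambda>_. {..m})"
  proof
    fix y assume "y \<in> \<phi> ` Ad m"
    then obtain \<alpha> where a: "\<alpha> \<in> Ad m" and y: "y = \<phi> \<alpha>" by blast
    have "\<alpha> i \<le> m" for i using a member_le_sum[of i UNIV \<alpha>] by (simp add: Ad_def)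
    then show "y \<in> Pi\<^sub>E J (\<lambda>_. {..m})" using y by (simp add: \<phi>_def)
  qed
  have fin: "finite (Pi\<^sub>E J (\<lambda>_. {..m}))" by (rule finite_PiE) auto
  have "card (Ad m :: ('n \<Rightarrow> nat) set) \<le> card (Pi\<^sub>E J (\<lambda>_. {..m}))"
    by (rule card_inj_on_le[OF inj img fin])
  also have "\<dots> = (m + 1) ^ card J" by (simp add: card_PiE)
  also have "card J = CARD('n) - 1" by (simp add: J_def card_Diff_singleton)
  finally show ?thesis .
qed

lemma pow_root: "0 \<le> (a::real) \<Longrightarrow> 0 < n \<Longrightarrow> (a ^ n) powr (1 / real n) = a"
proof (cases "a = 0")
  case True
  assume "0 < n" then show ?thesis using True by simp
next
  case False
  assume a: "0 \<le> a" and n: "0 < n"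
  then have ap: "0 < a" using False by simp
  have "(a ^ n) powr (1 / real n) = (a powr real n) powr (1 / real n)" using ap by (simp add: powr_realpow)
  also have "\<dots> = a" using n ap by (simp add: powr_powr)
  finally show ?thesis .
qed

lemma le_root: "0 \<le> (a::real) \<Longrightarrow> a ^ n \<le> b \<Longrightarrow> 0 < n \<Longrightarrow> a \<le> b powr (1 / real n)"
  using powr_mono2[of "1 / real n" "a ^ n" b] pow_root[of a n] by simp



theorem mainTheorem10:
  fixes c :: "('n::finite \<Rightarrow> nat) \<Rightarrow> real" and d k :: nat and \<epsilon> :: real
  assumes "CARD('n) \<ge> 2" and "d \<ge> 1" and "\<epsilon> > 0" and "k \<ge> 1"
    and "(real CARD('n) - 1) / (2 * real k) * ln (real k * real d + 1) < ln (1 + \<epsilon>)"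
  shows "sph_Lnorm k (hom_poly d c) \<le> sph_sup_norm (hom_poly d c)
       \<and> sph_sup_norm (hom_poly d c) \<le> (1 + \<epsilon>) * sph_Lnorm k (hom_poly d c)"
proof -
  note n2 = assms(1) and kpos = assms(4) and hyp = assms(5)
  let ?p = "hom_poly d c :: real^'n \<Rightarrow> real"
  let ?S = "sphere (0::real^'n) 1"
  define A where "A = sphere_avg (\<lambda>x. ?p x ^ (2*k))"
  define L where "L = sph_Lnorm k ?p"
  define M where "M = sph_sup_norm ?p"
  have LA: "L = A powr (1 / real (2*k))" by (simp add: L_def A_def sph_Lnorm_def)
  have pc: "continuous_on UNIV ?p" by (rule hom_poly_cont)
  have pV: "inV d ?p" unfolding inV_def by blast
  have qV: "inV (k*d) (\<lambda>x. ?p x ^ k)" by (rule inV_pow[OF pV])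
  have qsq: "\<And>x. (?p x ^ k)^2 = ?p x ^ (2*k)" by (simp add: power_mult[symmetric] mult.commute)
  have k2: "0 < 2*k" using kpos by simp
  have ne: "?S \<noteq> {}"
  proof -
    obtain i :: 'n where True by blast
    have "axis i (1::real) \<in> ?S" by (simp add: norm_axis_1)
    then show ?thesis by blast
  qed
  have bdd: "bdd_above ((\<lambda>x. \<bar>?p x\<bar>) ` ?S)"
  proof -
    have "compact ((\<lambda>x. \<bar>?p x\<bar>) ` ?S)"
      by (rule compact_continuous_image[OF _ compact_sphere]) (intro continuous_on_rabs continuous_on_subset[OF pc], simp)
    then show ?thesis by (simp add: bounded_imp_bdd_above compact_imp_bounded)
  qed
  have Mge: "\<And>x. x \<in> ?S \<Longrightarrow> \<bar>?p x\<bar> \<le> M"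
    unfolding M_def sph_sup_norm_def by (rule cSUP_upper[OF _ bdd])
  have M0: "0 \<le> M" using ne Mge by (meson abs_ge_zero all_not_in_conv order_trans)
  have A0: "0 \<le> A"
    unfolding A_def by (rule avg_nonneg) (use inV_cont[OF inV_pow[OF pV, of "2*k"]] in \<open>simp_all add: zero_le_even_power\<close>)
  have AM: "A \<le> M ^ (2*k)"
  proof -
    have "A \<le> sphere_avg (\<lambda>x::real^'n. M ^ (2*k))"
      unfolding A_def
    proof (rule avg_mono[OF inV_cont[OF inV_pow[OF pV, of "2*k"]] continuous_on_const])
      fix x :: "real^'n" assume x: "x \<in> ?S"
      have "?p x ^ (2*k) = \<bar>?p x\<bar> ^ (2*k)" by (simp add: power_even_abs)
      also have "\<dots> \<le> M ^ (2*k)" by (rule power_mono[OF Mge[OF x] abs_ge_zero])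
      finally show "?p x ^ (2*k) \<le> M ^ (2*k)" .
    qed
    then show ?thesis using avg_const[where 'n='n, of "M ^ (2*k)"] by simp
  qed
  have part1: "L \<le> M"
  proof -
    have "L \<le> (M ^ (2*k)) powr (1 / real (2*k))" unfolding LA by (rule powr_mono2[OF _ A0 AM]) simp
    also have "\<dots> = M" by (rule pow_root[OF M0 k2])
    finally show ?thesis .
  qed
  define B where "B = real ((k*d + 1) ^ (CARD('n) - 1))"
  have B0: "0 \<le> B" by (simp add: B_def)
  have cardB: "real (card (Ad (k*d) :: ('n \<Rightarrow> nat) set)) \<le> B"
    unfolding B_def using card_Ad[where 'n='n, of "k*d"] of_nat_le_iff by blast
  have Bbound: "B powr (1 / real (2*k)) < 1 + \<epsilon>"
  proof -
    have base: "0 < real k * real d + 1" by (simp add: add_pos_nonneg add_nonneg_pos)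
    have "B = (real k * real d + 1) ^ (CARD('n) - 1)" by (simp add: B_def add.commute)
    also have "\<dots> = (real k * real d + 1) powr (real (CARD('n) - 1))" using powr_realpow[OF base, of "CARD('n) - 1"] by simp
    finally have "B powr (1 / real (2*k)) = (real k * real d + 1) powr (real (CARD('n) - 1) * (1 / real (2*k)))"
      by (simp add: powr_powr)
    also have "real (CARD('n) - 1) * (1 / real (2*k)) = (real CARD('n) - 1) / (2 * real k)"
      using n2 by (simp add: of_nat_diff)
    also have "(real k * real d + 1) powr ((real CARD('n) - 1) / (2 * real k))
        = exp ((real CARD('n) - 1) / (2 * real k) * ln (real k * real d + 1))"
      using base by (simp add: powr_def mult.commute)
    also have "\<dots> < exp (ln (1 + \<epsilon>))" using hyp by simp
    also have "\<dots> = 1 + \<epsilon>" using assms(3) by simp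
    finally show ?thesis .
  qed
  have pt: "\<bar>?p x0\<bar> \<le> (1 + \<epsilon>) * L" if x0: "x0 \<in> ?S" for x0
  proof -
    have "\<bar>?p x0\<bar> ^ (2*k) = (?p x0 ^ k)^2" by (simp add: power_even_abs qsq)
    also have "\<dots> \<le> real (card (Ad (k*d) :: ('n \<Rightarrow> nat) set)) * sphere_avg (\<lambda>x. (?p x ^ k)^2)"
      by (rule key[OF qV x0])
    also have "sphere_avg (\<lambda>x. (?p x ^ k)^2) = A" by (simp add: A_def qsq)
    also have "real (card (Ad (k*d) :: ('n \<Rightarrow> nat) set)) * A \<le> B * A"
      by (rule mult_right_mono[OF cardB A0])
    finally have "\<bar>?p x0\<bar> \<le> (B * A) powr (1 / real (2*k))"
      by (rule le_root[OF abs_ge_zero _ k2])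
    also have "\<dots> = B powr (1 / real (2*k)) * L" unfolding LA by (rule powr_mult)
    also have "\<dots> \<le> (1 + \<epsilon>) * L"
    proof (rule mult_right_mono)
      show "B powr (1 / real (2*k)) \<le> 1 + \<epsilon>" using Bbound by simp
      show "0 \<le> L" unfolding LA by simp
    qed
    finally show ?thesis .
  qed
  have part2: "M \<le> (1 + \<epsilon>) * L"
    unfolding M_def sph_sup_norm_def by (rule cSUP_least[OF ne pt])
  show ?thesis using part1 part2 unfolding L_def M_def by blast
qed

end
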